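(* Given $F\in \mathcal{G}_{N}^{dif}(A)$ with coefficients $f_{u}^{i}$, the left substitutional inverse of $F$ (i.e. the series $G$ with $G\circ F=(z_{1},\ldots,z_{N})$) is the power series $G(z)$ with coefficients $g_{v}^{j}=\langle S_{\mathcal{L}}(Y_{v}^{j}),F\rangle$, where $S_{\mathcal{L}}=\mathbf{s}S_{\mathcal{H}}\mathbf{s}$ is the antipode of the left Lagrange Hopf algebra $\mathcal{L}^{N}$. The right substitutional inverse of $F$ (i.e. the series $H$ with $F\circ H=(z_{1},\ldots,z_{N})$) is the power series $H(z)$ with coefficients $h_{v}^{j}=\langle S_{\mathcal{R}}(Y_{v}^{j}),F\rangle$, where $S_{\mathcal{R}}=\mathbf{t}S_{\mathcal{H}}\mathbf{t}$ is the antipode of the right Lagrange Hopf algebra $\mathcal{R}^{N}$.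
   Context: Let $A$ be a non-commutative unital algebra and $z_{1},\ldots,z_{N}$ non-commuting variables commuting with elements of $A$; for a word $w=w(1)\cdots w(p)$ in the free monoid on $\langle N\rangle=\{1,\ldots,N\}$ put $z_{w}=z_{w(1)}\cdots z_{w(p)}$. $\mathcal{G}_{N}^{dif}(A)$ is the set of $N$-tuples $F=(F^{1},\ldots,F^{N})$ of formal power series $F^{j}(z)=z_{j}+\sum_{|u|\geq 2}f_{u}^{j}z_{u}$ with $f_{u}^{j}\in A$. For $F,G\in\mathcal{G}_{N}^{dif}(A)$, $F\circ G$ denotes substitution of $G^{j}$ for $z_{j}$ in each $F^{i}$; its coefficients are $(F\circ G)_{u}^{i}=\sum f_{w}^{i}g_{u|C_{1}}^{w(1)}\cdots g_{u|C_{q}}^{w(q)}$, summed over all colored interval (ordered) partitions $((C_{1},\ldots,C_{q}),w(1)\cdots w(q))$, $1\le q\le p$, of the colored set $([p],u(1)\cdots u(p))$ (with $f_{j}^{i}=\delta_{ij}$). $\mathcal{H}=\mathcal{H}^{N}$ is the incidence Hopf algebra of $N$-colored interval partitions: as an algebra it is free on generators $Y_{u}^{i}$ ($1\le i\le N$, $|u|\ge 2$), with $Y_{j}^{i}=\delta_{ij}1$, coproduct $\Delta(Y_{u}^{i})=\sum Y_{u|C_{1}}^{v(1)}\cdots Y_{u|C_{q}}^{v(q)}\otimes Y_{v}^{i}$ (sum over colored interval partitions $((C_{1},\ldots,C_{q}),v)$ of $([|u|],u)$), counit $\varepsilon(Y_{u}^{i})=0$ for $|u|\ge2$, and antipode $S_{\mathcal{H}}$.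 $\mathbf{s}$ is the algebra anti-automorphism of $\mathcal{H}$ with $\mathbf{s}(Y_{u}^{i})=Y_{u^{*}}^{i}$ ($u^{*}$ the reversed word), and $\mathbf{t}$ is the algebra anti-automorphism with $\mathbf{t}(Y_{u}^{i})=Y_{u}^{i}$. The left Lagrange Hopf algebra $\mathcal{L}^{N}$ is $\mathcal{H}^{N}$ with coproduct $\Delta^{op}$ and antipode $S_{\mathcal{H}}^{-1}=\mathbf{s}S_{\mathcal{H}}\mathbf{s}$; the right Lagrange Hopf algebra $\mathcal{R}^{N}$ is the $\mathbf{t}$-transformed Hopf algebra with antipode $\mathbf{t}S_{\mathcal{H}}\mathbf{t}$. The pairing $\langle\,,\rangle:\mathcal{L}^{N}\times\mathcal{G}_{N}^{dif}(A)\to A$ is the bilinear map determined by $\langle Y_{u_{1}}^{i_{1}}\cdots Y_{u_{q}}^{i_{q}},F\rangle=f_{u_{1}}^{i_{1}}\cdots f_{u_{q}}^{i_{q}}$ (and $\langle 1,F\rangle=1$); it satisfies $\langle Y_{u}^{i},F\circ G\rangle=m_{A}\langle\Delta^{op}(Y_{u}^{i}),F\otimes G\rangle$. *)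

theory Defs
  imports Main
begin

definition words_over :: "nat \<Rightarrow> nat list set" where
  "words_over N = {w. set w \<subseteq> {1..N}}"

fun words :: "nat \<Rightarrow> nat \<Rightarrow> nat list list" where
  "words N 0 = [[]]"
| "words N (Suc q) = concat (map (\<lambda>j. map (Cons j) (words N q)) [1..<Suc N])"

text \<open>Interval (ordered) partitions of [p] = compositions of p: lists of
  positive block sizes summing to p.\<close>
fun comps :: "nat \<Rightarrow> nat list list" where
  "comps 0 = [[]]"
| "comps (Suc n) = concat (map (\<lambda>k. map (Cons (Suc k)) (comps (n - k))) [0..<Suc n])"

text \<open>Restriction of a word u to the consecutive blocks C_1,...,C_q of sizes ls.\<close>
fun blocks :: "nat list \<Rightarrow> 'b list \<Rightarrow> 'b list list" where
  "blocks [] xs = []"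
| "blocks (l # ls) xs = take l xs # blocks ls (drop l xs)"

text \<open>A series F is given by its coefficient function f, with f i u = f_u^i.
  Membership in G_N^dif: no constant term and linear part the identity.\<close>
definition Gdif :: "nat \<Rightarrow> (nat \<Rightarrow> nat list \<Rightarrow> 'a::ring_1) \<Rightarrow> bool" where
  "Gdif N f \<longleftrightarrow> (\<forall>i\<in>{1..N}. f i [] = 0 \<and> (\<forall>j\<in>{1..N}. f i [j] = (if i = j then 1 else 0)))"

text \<open>Coefficients of F \<circ> G: sum over colored interval partitions.\<close>
definition comp :: "nat \<Rightarrow> (nat \<Rightarrow> nat list \<Rightarrow> 'a::ring_1) \<Rightarrow> (nat \<Rightarrow> nat list \<Rightarrow> 'a)
    \<Rightarrow> nat \<Rightarrow> nat list \<Rightarrow> 'a" where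
  "comp N f g i u = sum_list (map (\<lambda>ls. sum_list (map (\<lambda>w.
       f i w * prod_list (map (\<lambda>(j, b). g j b) (zip w (blocks ls u))))
     (words N (length ls)))) (comps (length u)))"

definition idc :: "nat \<Rightarrow> nat list \<Rightarrow> 'a::ring_1" where
  "idc i u = (if u = [i] then 1 else 0)"

text \<open>A monomial is a list of generators Y_u^i, encoded as pairs (i,u);
  an element is a formal integer linear combination of monomials.\<close>
type_synonym mono = "(nat \<times> nat list) list"
type_synonym fa = "(int \<times> mono) list"

definition fa_one :: fa where "fa_one = [(1, [])]"

definition fa_mult :: "fa \<Rightarrow> fa \<Rightarrow> fa" where
  "fa_mult a b = concat (map (\<lambda>(c, m). map (\<lambda>(d, n). (c * d, m @ n)) b) a)"

definition fa_neg :: "fa \<Rightarrow> fa" where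
  "fa_neg a = map (\<lambda>(c, m). (- c, m)) a"

definition fa_scale :: "int \<Rightarrow> fa \<Rightarrow> fa" where
  "fa_scale k a = map (\<lambda>(c, m). (k * c, m)) a"

definition fa_prod :: "fa list \<Rightarrow> fa" where
  "fa_prod xs = foldr fa_mult xs fa_one"

definition Y :: "nat \<Rightarrow> nat list \<Rightarrow> fa" where
  "Y i u = (if 2 \<le> length u then [(1, [(i, u)])]
            else if u = [i] then fa_one else [])"

lemma comps_props: "ls \<in> set (comps n) \<Longrightarrow> sum_list ls = n \<and> (\<forall>l\<in>set ls. 0 < l)"
  by (induction n arbitrary: ls rule: comps.induct) fastforce+

lemma blocks_len: "b \<in> set (blocks ls xs) \<Longrightarrow> \<exists>l\<in>set ls. length b \<le> l"
  by (induction ls xs rule: blocks.induct) auto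

lemma member_lt_sum:
  assumes "2 \<le> length ls" "\<forall>l\<in>set ls. (0::nat) < l" "l \<in> set ls"
  shows "l < sum_list ls"
  using assms
proof (induction ls)
  case Nil then show ?case by simp
next
  case (Cons a xs)
  show ?case
  proof (cases "l = a")
    case True
    from Cons.prems(1) obtain c ys where "xs = c # ys" by (cases xs) auto
    with Cons.prems(2) True show ?thesis by (auto simp: member_le_sum_list)
  next
    case False
    then have l: "l \<in> set xs" using Cons.prems(3) by simp
    show ?thesis
    proof (cases "2 \<le> length xs")
      case True
      then have "l < sum_list xs" using Cons.IH Cons.prems(2) l by auto
      then show ?thesis by simp
    next
      case False
      with l have "xs = [l]" by (cases xs) (auto simp: Suc_le_eq)
      with Cons.prems(2) show ?thesis by simp
    qed
  qed
qed

function SH :: "nat \<Rightarrow> nat \<Rightarrow> nat list \<Rightarrow> fa" where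
  "SH N i u = (if length u < 2 then Y i u else
     fa_neg (concat (map (\<lambda>ls. concat (map (\<lambda>v.
         fa_mult (fa_prod (rev (map (\<lambda>(j, b). SH N j b) (zip v (blocks ls u))))) (Y i v))
       (words N (length ls))))
     (filter (\<lambda>ls. 2 \<le> length ls) (comps (length u))))))"
  by pat_completeness auto
termination
proof (relation "measure (\<lambda>(N, i, u). length u)")
  show "wf (measure (\<lambda>(N, i, u). length u))" by simp
next
  fix N i u ls v x j b
  assume ls: "ls \<in> set (filter (\<lambda>ls. 2 \<le> length ls) (comps (length u)))"
    and x: "x \<in> set (zip v (blocks ls u))" and jb: "(j, b) = x"
  have b: "b \<in> set (blocks ls u)" using x jb by (auto dest: set_zip_rightD)
  then obtain l where l: "l \<in> set ls" "length b \<le> l" using blocks_len by blast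
  from ls have "2 \<le> length ls" "sum_list ls = length u" "\<forall>l\<in>set ls. 0 < l"
    using comps_props by auto
  with l member_lt_sum have "length b < length u" by fastforce
  then show "((N, j, b), N, i, u) \<in> measure (\<lambda>(N, i, u). length u)" by simp
qed

text \<open>The above is the standard recursion for the antipode of the connected
  bialgebra H: from m(S\<otimes>id)\<Delta> = \<eta>\<epsilon> on Y_u^i, using that the
  q = 1 term of \<Delta>(Y_u^i) is Y_u^i \<otimes> 1 and S is an algebra anti-morphism:
  S(Y_u^i) = - sum over colored interval partitions ((C_1..C_q),v) with q \<ge> 2 of
  S(Y_{u|C_q}^{v(q)}) ... S(Y_{u|C_1}^{v(1)}) Y_v^i.\<close>

definition SH_ext :: "nat \<Rightarrow> fa \<Rightarrow> fa" where
  "SH_ext N a = concat (map (\<lambda>(c, m). fa_scale c (fa_prod (rev (map (\<lambda>(i, u). SH N i u) m)))) a)"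

definition s_map :: "fa \<Rightarrow> fa" where
  "s_map a = map (\<lambda>(c, m). (c, rev (map (\<lambda>(i, u). (i, rev u)) m))) a"

definition t_map :: "fa \<Rightarrow> fa" where
  "t_map a = map (\<lambda>(c, m). (c, rev m)) a"

definition S_L :: "nat \<Rightarrow> fa \<Rightarrow> fa" where
  "S_L N a = s_map (SH_ext N (s_map a))"

definition S_R :: "nat \<Rightarrow> fa \<Rightarrow> fa" where
  "S_R N a = t_map (SH_ext N (t_map a))"

definition pairing :: "fa \<Rightarrow> (nat \<Rightarrow> nat list \<Rightarrow> 'a::ring_1) \<Rightarrow> 'a" where
  "pairing a f = sum_list (map (\<lambda>(c, m). of_int c * prod_list (map (\<lambda>(i, u). f i u) m)) a)"

end

theory Submission
  imports Defs
begin


fun P :: "(nat \<Rightarrow> nat list \<Rightarrow> 'a::ring_1) \<Rightarrow> nat list \<Rightarrow> nat list \<Rightarrow> 'a" where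
  "P \<alpha> [] u = (if u = [] then 1 else 0)"
| "P \<alpha> (a # w) u = (\<Sum>k\<in>{1..length u}. \<alpha> a (take k u) * P \<alpha> w (drop k u))"

lemma P_zero: "length u < length w \<Longrightarrow> P \<alpha> w u = 0"
proof (induction w arbitrary: u)
  case Nil then show ?case by simp
next
  case (Cons a w)
  show ?case by (simp, rule sum.neutral, use Cons in auto)
qed

lemma P_single: "u \<noteq> [] \<Longrightarrow> P \<alpha> [a] u = \<alpha> a u"
proof -
  assume u: "u \<noteq> []"
  have "P \<alpha> [a] u = (\<Sum>k\<in>{1..length u}. if k = length u then \<alpha> a u else 0)"
  proof (simp only: P.simps(2), rule sum.cong[OF refl])
    fix k assume "k \<in> {1..length u}"
    then show "\<alpha> a (take k u) * P \<alpha> [] (drop k u) = (if k = length u then \<alpha> a u else 0)"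
      by auto
  qed
  also have "\<dots> = \<alpha> a u" using u by (auto simp: Suc_le_eq)
  finally show ?thesis .
qed

lemma P_single': "P \<alpha> [a] u = (if u = [] then 0 else \<alpha> a u)"
  using P_single by auto

lemma P_diag: "length w = length u \<Longrightarrow> P \<alpha> w u = prod_list (map2 (\<lambda>a b. \<alpha> a [b]) w u)"
proof (induction w arbitrary: u)
  case Nil then show ?case by simp
next
  case (Cons a w)
  then obtain b u' where u: "u = b # u'" by (cases u) auto
  have "P \<alpha> (a # w) u = (\<Sum>k\<in>{1..length u}. if k = 1 then \<alpha> a [b] * P \<alpha> w u' else 0)"
  proof (simp only: P.simps, rule sum.cong[OF refl])
    fix k assume k: "k \<in> {1..length u}"
    show "\<alpha> a (take k u) * P \<alpha> w (drop k u) = (if k = 1 then \<alpha> a [b] * P \<alpha> w u' else 0)"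
    proof (cases "k = 1")
      case True then show ?thesis using u by simp
    next
      case False
      then have "length (drop k u) < length w" using k Cons.prems by auto
      then show ?thesis using False by (simp add: P_zero)
    qed
  qed
  also have "\<dots> = \<alpha> a [b] * P \<alpha> w u'" using u by (auto simp: Suc_le_eq)
  finally show ?case using Cons u by simp
qed

lemma P_append: "P \<alpha> (w1 @ w2) u = (\<Sum>m\<in>{0..length u}. P \<alpha> w1 (take m u) * P \<alpha> w2 (drop m u))"
proof (induction w1 arbitrary: u)
  case Nil
  have "(\<Sum>m\<in>{0..length u}. P \<alpha> [] (take m u) * P \<alpha> w2 (drop m u))
      = (\<Sum>m\<in>{0..length u}. if m = 0 then P \<alpha> w2 u else 0)"
    by (rule sum.cong) auto
  then show ?case by simp
next
  case (Cons a w1)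
  define n where "n = length u"
  have "P \<alpha> ((a # w1) @ w2) u = (\<Sum>k\<in>{1..n}. \<alpha> a (take k u) * P \<alpha> (w1 @ w2) (drop k u))"
    by (simp add: n_def)
  also have "\<dots> = (\<Sum>k\<in>{1..n}. \<Sum>m'\<in>{0..n-k}. \<alpha> a (take k u) * (P \<alpha> w1 (take m' (drop k u)) * P \<alpha> w2 (drop m' (drop k u))))"
    by (simp add: Cons n_def sum_distrib_left)
  also have "\<dots> = (\<Sum>k\<in>{1..n}. \<Sum>m\<in>{k..n}. \<alpha> a (take k u) * (P \<alpha> w1 (drop k (take m u)) * P \<alpha> w2 (drop m u)))"
  proof (rule sum.cong[OF refl])
    fix k assume k: "k \<in> {1..n}"
    show "(\<Sum>m'\<in>{0..n-k}. \<alpha> a (take k u) * (P \<alpha> w1 (take m' (drop k u)) * P \<alpha> w2 (drop m' (drop k u))))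
        = (\<Sum>m\<in>{k..n}. \<alpha> a (take k u) * (P \<alpha> w1 (drop k (take m u)) * P \<alpha> w2 (drop m u)))"
      using k
      by (intro sum.reindex_bij_witness[where i="\<lambda>m. m - k" and j="\<lambda>m'. m' + k"])
         (auto simp: take_drop add.commute)
  qed
  also have "\<dots> = (\<Sum>m\<in>{0..n}. \<Sum>k\<in>{1..m}. \<alpha> a (take k u) * (P \<alpha> w1 (drop k (take m u)) * P \<alpha> w2 (drop m u)))"
  proof -
    let ?F = "\<lambda>k m. \<alpha> a (take k u) * (P \<alpha> w1 (drop k (take m u)) * P \<alpha> w2 (drop m u))"
    have "(\<Sum>k\<in>{1..n}. \<Sum>m\<in>{k..n}. ?F k m) = (\<Sum>k\<in>{1..n}. \<Sum>m\<in>{m\<in>{0..n}. k \<le> m}. ?F k m)"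
      by (intro sum.cong) auto
    also have "\<dots> = (\<Sum>m\<in>{0..n}. \<Sum>k | k \<in> {1..n} \<and> k \<le> m. ?F k m)"
      by (rule sum.swap_restrict) auto
    also have "\<dots> = (\<Sum>m\<in>{0..n}. \<Sum>k\<in>{1..m}. ?F k m)"
      by (intro sum.cong) auto
    finally show ?thesis .
  qed
  also have "\<dots> = (\<Sum>m\<in>{0..n}. P \<alpha> (a # w1) (take m u) * P \<alpha> w2 (drop m u))"
    by (rule sum.cong[OF refl]) (auto simp: sum_distrib_right mult.assoc n_def min_def intro!: sum.cong)
  finally show ?case by (simp add: n_def)
qed



lemma comps_len: "ls \<in> set (comps n) \<Longrightarrow> length ls \<le> n"
proof -
  assume "ls \<in> set (comps n)"
  then have s: "sum_list ls = n" and p: "\<forall>l\<in>set ls. 0 < l" using comps_props by auto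
  have "length ls \<le> sum_list ls" using p by (induction ls) (auto simp: Suc_le_eq)
  then show ?thesis using s by simp
qed

lemma filter_comps_0: "filter (\<lambda>ls. length ls = 0) (comps n) = (if n = 0 then [[]] else [])"
proof (cases n)
  case 0 then show ?thesis by simp
next
  case (Suc m)
  have "\<forall>ls\<in>set (comps n). \<not> length ls = 0" using comps_props Suc by fastforce
  then show ?thesis using Suc by (simp only: filter_False) simp
qed

lemma sum_list_concat': "sum_list (concat xss) = sum_list (map sum_list xss)"
  by (induction xss) auto

lemma sum_list_const_mult': "sum_list (map (\<lambda>x. c * g x) xs) = (c::'a::ring_1) * sum_list (map g xs)"
  by (induction xs) (auto simp: distrib_left)

lemma P_comps: "P \<alpha> w u = sum_list (map (\<lambda>ls. prod_list (map (\<lambda>(j,b). \<alpha> j b) (zip w (blocks ls u))))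
    (filter (\<lambda>ls. length ls = length w) (comps (length u))))"
proof (induction w arbitrary: u)
  case Nil
  then show ?case using filter_comps_0[of "length u"] by simp
next
  case (Cons a w)
  show ?case
  proof (cases u)
    case Nil
    then show ?thesis by simp
  next
    case (Cons b u')
    define n where "n = length u'"
    have lu: "length u = Suc n" using Cons n_def by simp
    let ?h = "\<lambda>ls. prod_list (map (\<lambda>(j,b). \<alpha> j b) (zip (a # w) (blocks ls u)))"
    have "sum_list (map ?h (filter (\<lambda>ls. length ls = length (a # w)) (comps (length u))))
        = sum_list (map (\<lambda>k. sum_list (map ?h (map (Cons (Suc k)) (filter (\<lambda>ls. length ls = length w) (comps (n - k)))))) [0..<Suc n])"
      by (simp add: lu filter_concat sum_list_concat' map_concat filter_map o_def)
    also have "\<dots> = sum_list (map (\<lambda>k. \<alpha> a (take (Suc k) u) * P \<alpha> w (drop (Suc k) u)) [0..<Suc n])"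
    proof (rule arg_cong[where f=sum_list], rule map_cong[OF refl])
      fix k assume k: "k \<in> set [0..<Suc n]"
      have ld: "length (drop (Suc k) u) = n - k" using lu by simp
      show "sum_list (map ?h (map (Cons (Suc k)) (filter (\<lambda>ls. length ls = length w) (comps (n - k)))))
          = \<alpha> a (take (Suc k) u) * P \<alpha> w (drop (Suc k) u)"
        by (simp add: Cons.IH[of "drop (Suc k) u"] ld lu o_def sum_list_const_mult' del: take_Suc_Cons drop_Suc_Cons)
    qed
    also have "\<dots> = (\<Sum>k\<in>{0..<Suc n}. \<alpha> a (take (Suc k) u) * P \<alpha> w (drop (Suc k) u))"
      by (simp add: interv_sum_list_conv_sum_set_nat)
    also have "\<dots> = (\<Sum>k\<in>{1..length u}. \<alpha> a (take k u) * P \<alpha> w (drop k u))"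
      by (rule sum.reindex_bij_witness[where i="\<lambda>k. k - 1" and j="Suc"]) (auto simp: lu)
    finally show ?thesis by simp
  qed
qed



definition Wd :: "nat \<Rightarrow> nat \<Rightarrow> nat list set" where
  "Wd N q = {w. set w \<subseteq> {1..N} \<and> length w = q}"
definition WS :: "nat \<Rightarrow> nat \<Rightarrow> nat list set" where
  "WS N n = {w. set w \<subseteq> {1..N} \<and> length w \<le> n}"

lemma finite_Wd[simp]: "finite (Wd N q)"
  unfolding Wd_def by (rule finite_lists_length_eq) simp
lemma finite_WS[simp]: "finite (WS N n)"
  unfolding WS_def by (rule finite_lists_length_le) simp

lemma words_sum: "sum_list (map h (words N q)) = sum h (Wd N q)"
proof (induction q arbitrary: h)
  case 0
  have "Wd N 0 = {[]}" by (auto simp: Wd_def)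
  then show ?case by simp
next
  case (Suc q)
  have "sum_list (map h (words N (Suc q))) = sum_list (map (\<lambda>j. sum_list (map (\<lambda>w. h (j # w)) (words N q))) [1..<Suc N])"
    by (simp add: sum_list_concat' map_concat o_def)
  also have "\<dots> = sum_list (map (\<lambda>j. \<Sum>w\<in>Wd N q. h (j # w)) [1..<Suc N])"
    by (simp add: Suc.IH)
  also have "\<dots> = (\<Sum>j\<in>{1..N}. \<Sum>w\<in>Wd N q. h (j # w))"
    by (simp only: interv_sum_list_conv_sum_set_nat set_upt atLeastLessThanSuc_atLeastAtMost)
  also have "\<dots> = (\<Sum>(j,w)\<in>{1..N} \<times> Wd N q. h (j # w))"
    by (rule sum.cartesian_product)
  also have "\<dots> = sum h (Wd N (Suc q))"
    by (rule sum.reindex_bij_witness[where i="\<lambda>w. (hd w, tl w)" and j="\<lambda>(j,w). j # w"])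
       (auto simp: Wd_def length_Suc_conv)
  finally show ?case .
qed

lemma set_words: "set (words N q) = Wd N q"
proof (induction q)
  case 0 then show ?case by (auto simp: Wd_def)
next
  case (Suc q)
  have "set (words N (Suc q)) = (\<Union>j\<in>{1..N}. Cons j ` Wd N q)"
    using Suc by (simp add: atLeastLessThanSuc_atLeastAtMost del: upt_Suc)
  also have "\<dots> = Wd N (Suc q)"
  proof (intro equalityI subsetI)
    fix x assume "x \<in> (\<Union>j\<in>{1..N}. Cons j ` Wd N q)"
    then show "x \<in> Wd N (Suc q)" by (auto simp: Wd_def)
  next
    fix x assume "x \<in> Wd N (Suc q)"
    then obtain y ys where x: "x = y # ys" and y: "y \<in> {1..N}" and ys: "ys \<in> Wd N q"
      by (cases x) (auto simp: Wd_def)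
    then show "x \<in> (\<Union>j\<in>{1..N}. Cons j ` Wd N q)" by blast
  qed
  finally show ?case .
qed

lemma sum_list_group:
  assumes "\<forall>ls\<in>set L. length ls \<le> n"
  shows "sum_list (map h (filter (\<lambda>ls. Q (length ls)) L))
       = (\<Sum>q\<in>{q. q \<le> n \<and> Q q}. sum_list (map h (filter (\<lambda>ls. length ls = q) L)))"
  using assms
proof (induction L)
  case Nil then show ?case by simp
next
  case (Cons x L)
  have fin: "finite {q. q \<le> n \<and> Q q}" by (rule finite_subset[of _ "{..n}"]) auto
  have "(\<Sum>q\<in>{q. q \<le> n \<and> Q q}. sum_list (map h (filter (\<lambda>ls. length ls = q) (x # L))))
     = (\<Sum>q\<in>{q. q \<le> n \<and> Q q}. (if length x = q then h x else 0) + sum_list (map h (filter (\<lambda>ls. length ls = q) L)))"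
    by (rule sum.cong) auto
  also have "\<dots> = (\<Sum>q\<in>{q. q \<le> n \<and> Q q}. if length x = q then h x else 0) + sum_list (map h (filter (\<lambda>ls. Q (length ls)) L))"
    using Cons by (simp add: sum.distrib)
  also have "\<dots> = sum_list (map h (filter (\<lambda>ls. Q (length ls)) (x # L)))"
    using Cons.prems fin by (simp add: sum.delta)
  finally show ?case by simp
qed

lemma sum_list_sum_swap: "sum_list (map (\<lambda>x. \<Sum>y\<in>S. g x y) L) = (\<Sum>y\<in>S. sum_list (map (\<lambda>x. g x y) L))"
  by (induction L) (auto simp: sum.distrib)

lemma lemma_G:
  "sum_list (map (\<lambda>ls. sum_list (map (\<lambda>w. c w * prod_list (map (\<lambda>(j,b). \<gamma> j b) (zip w (blocks ls u))))
      (words N (length ls)))) (filter (\<lambda>ls. Q (length ls)) (comps (length u))))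
   = (\<Sum>q\<in>{q. q \<le> length u \<and> Q q}. \<Sum>w\<in>Wd N q. (c w::'a::ring_1) * P \<gamma> w u)"
proof -
  let ?H = "\<lambda>ls. sum_list (map (\<lambda>w. c w * prod_list (map (\<lambda>(j,b). \<gamma> j b) (zip w (blocks ls u))))
      (words N (length ls)))"
  have "sum_list (map ?H (filter (\<lambda>ls. Q (length ls)) (comps (length u))))
     = (\<Sum>q\<in>{q. q \<le> length u \<and> Q q}. sum_list (map ?H (filter (\<lambda>ls. length ls = q) (comps (length u)))))"
    by (rule sum_list_group) (auto dest: comps_len)
  also have "\<dots> = (\<Sum>q\<in>{q. q \<le> length u \<and> Q q}. \<Sum>w\<in>Wd N q. c w * P \<gamma> w u)"
  proof (rule sum.cong[OF refl])
    fix q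
    have "sum_list (map ?H (filter (\<lambda>ls. length ls = q) (comps (length u))))
        = sum_list (map (\<lambda>ls. \<Sum>w\<in>Wd N q. c w * prod_list (map (\<lambda>(j,b). \<gamma> j b) (zip w (blocks ls u))))
             (filter (\<lambda>ls. length ls = q) (comps (length u))))"
      by (rule arg_cong[where f=sum_list], rule map_cong[OF refl]) (simp add: words_sum)
    also have "\<dots> = (\<Sum>w\<in>Wd N q. sum_list (map (\<lambda>ls. c w * prod_list (map (\<lambda>(j,b). \<gamma> j b) (zip w (blocks ls u))))
             (filter (\<lambda>ls. length ls = q) (comps (length u)))))"
      by (rule sum_list_sum_swap)
    also have "\<dots> = (\<Sum>w\<in>Wd N q. c w * P \<gamma> w u)"
      by (rule sum.cong[OF refl]) (simp add: sum_list_const_mult' P_comps Wd_def)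
    finally show "sum_list (map ?H (filter (\<lambda>ls. length ls = q) (comps (length u))))
        = (\<Sum>w\<in>Wd N q. c w * P \<gamma> w u)" .
  qed
  finally show ?thesis .
qed

lemma WS_group: "(\<Sum>w\<in>WS N n. F w) = (\<Sum>q\<in>{..n}. \<Sum>w\<in>Wd N q. F w)"
proof -
  have "(\<Sum>q\<in>{..n}. \<Sum>w\<in>Wd N q. F w) = (\<Sum>q\<in>{..n}. sum F {w\<in>WS N n. length w = q})"
    by (rule sum.cong) (auto simp: Wd_def WS_def intro!: arg_cong[where f="sum F"])
  also have "\<dots> = (\<Sum>w\<in>WS N n. F w)"
    by (rule sum.group[OF finite_WS]) (auto simp: WS_def)
  finally show ?thesis by simp
qed

lemma comp_CS: "comp N \<alpha> \<gamma> i u = (\<Sum>w\<in>WS N (length u). \<alpha> i w * P \<gamma> w u)"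
proof -
  have "comp N \<alpha> \<gamma> i u = (\<Sum>q\<in>{q. q \<le> length u \<and> True}. \<Sum>w\<in>Wd N q. \<alpha> i w * P \<gamma> w u)"
    using lemma_G[where Q="\<lambda>_. True" and c="\<alpha> i" and \<gamma>=\<gamma> and u=u and N=N]
    by (simp add: comp_def)
  also have "\<dots> = (\<Sum>w\<in>WS N (length u). \<alpha> i w * P \<gamma> w u)"
    by (simp add: WS_group atMost_def)
  finally show ?thesis .
qed



definition ev :: "(nat \<Rightarrow> nat list \<Rightarrow> 'a::ring_1) \<Rightarrow> fa \<Rightarrow> 'a" where
  "ev \<beta> a = sum_list (map (\<lambda>(c,m). of_int c * prod_list (map (\<lambda>(i,u). \<beta> i u) (rev m))) a)"

lemma ev_Nil[simp]: "ev \<beta> [] = 0" by (simp add: ev_def)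
lemma ev_Cons: "ev \<beta> ((c,m) # a) = of_int c * prod_list (map (\<lambda>(i,u). \<beta> i u) (rev m)) + ev \<beta> a"
  by (simp add: ev_def)
lemma ev_append[simp]: "ev \<beta> (a @ b) = ev \<beta> a + ev \<beta> b" by (simp add: ev_def)
lemma ev_concat: "ev \<beta> (concat xs) = sum_list (map (ev \<beta>) xs)"
  by (induction xs) auto
lemma ev_neg[simp]: "ev \<beta> (fa_neg a) = - ev \<beta> a"
  by (induction a) (auto simp: ev_def fa_neg_def)
lemma ev_scale[simp]: "ev \<beta> (fa_scale k a) = of_int k * ev \<beta> a"
  by (induction a) (auto simp: ev_def fa_scale_def distrib_left mult.assoc)
lemma ev_one[simp]: "ev \<beta> fa_one = 1" by (simp add: ev_def fa_one_def)

lemma ev_mult_aux: "ev \<beta> (map (\<lambda>(d,n). (c*d, m@n)) b) = ev \<beta> b * (of_int c * prod_list (map (\<lambda>(i,u). \<beta> i u) (rev m)))"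
proof (induction b)
  case Nil then show ?case by simp
next
  case (Cons x b)
  obtain d n where x: "x = (d,n)" by (cases x)
  let ?M = "prod_list (map (\<lambda>(i,u). \<beta> i u) (rev m))"
  let ?N = "prod_list (map (\<lambda>(i,u). \<beta> i u) (rev n))"
  have "of_int (c*d) * (?N * ?M) = of_int d * ?N * (of_int c * ?M)"
  proof -
    have "of_int (c*d) * (?N * ?M) = of_int d * (of_int c * ?N) * ?M" by (simp add: mult.assoc mult.commute[of c d])
    also have "\<dots> = of_int d * (?N * of_int c) * ?M" by (subst mult_of_int_commute[of c]) (rule refl)
    also have "\<dots> = of_int d * ?N * (of_int c * ?M)" by (simp add: mult.assoc)
    finally show ?thesis .
  qed
  then show ?case using Cons by (simp add: x ev_Cons distrib_right)
qed

lemma ev_mult[simp]: "ev \<beta> (fa_mult a b) = ev \<beta> b * ev \<beta> a"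
proof (induction a)
  case Nil then show ?case by (simp add: fa_mult_def)
next
  case (Cons x a)
  obtain c m where x: "x = (c,m)" by (cases x)
  have "fa_mult (x # a) b = map (\<lambda>(d,n). (c*d, m@n)) b @ fa_mult a b"
    by (simp add: fa_mult_def x)
  then show ?case using Cons by (simp add: ev_mult_aux x ev_Cons distrib_left)
qed

lemma ev_prod: "ev \<beta> (fa_prod xs) = prod_list (map (ev \<beta>) (rev xs))"
  by (induction xs) (auto simp: fa_prod_def)

lemma ev_prod_rev: "ev \<beta> (fa_prod (rev xs)) = prod_list (map (ev \<beta>) xs)"
  by (simp add: ev_prod)

lemma ev_Y: "ev \<beta> (Y i u) = (if 2 \<le> length u then \<beta> i u else if u = [i] then 1 else 0)"
  by (simp add: Y_def ev_def fa_one_def)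

lemma pairing_s: "pairing (s_map a) f = ev (\<lambda>i u. f i (rev u)) a"
  by (induction a) (auto simp: pairing_def s_map_def ev_def rev_map o_def case_prod_unfold)

lemma pairing_t: "pairing (t_map a) f = ev f a"
  by (induction a) (auto simp: pairing_def t_map_def ev_def case_prod_beta)

lemma ev_SH_ext: "ev \<beta> (SH_ext N a) = sum_list (map (\<lambda>(c,m). of_int c * prod_list (map (\<lambda>(i,u). ev \<beta> (SH N i u)) m)) a)"
  by (induction a) (auto simp: SH_ext_def ev_concat ev_prod_rev o_def case_prod_beta)

declare SH.simps[simp del]

lemma SH_short: "length u < 2 \<Longrightarrow> SH N i u = Y i u"
  by (subst SH.simps) simp

lemma SH_long: "2 \<le> length u \<Longrightarrow> SH N i u = fa_neg (concat (map (\<lambda>ls. concat (map (\<lambda>v.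
         fa_mult (fa_prod (rev (map (\<lambda>(j, b). SH N j b) (zip v (blocks ls u))))) (Y i v))
       (words N (length ls))))
     (filter (\<lambda>ls. 2 \<le> length ls) (comps (length u)))))"
  by (subst SH.simps) simp



declare P.simps(2)[simp del]

lemma Wd0: "Wd N 0 = {[]}" by (auto simp: Wd_def)

lemma Wd1_sum: "(\<Sum>w\<in>Wd N 1. F w) = (\<Sum>k\<in>{1..N}. F [k])"
  by (rule sum.reindex_bij_witness[where i="\<lambda>k. [k]" and j="hd"])
     (auto simp: Wd_def length_Suc_conv)

lemma words_len: "v \<in> set (words N q) \<Longrightarrow> length v = q"
  by (simp add: set_words Wd_def)

lemma helper: "2 \<le> length v \<Longrightarrow> ev \<beta> (fa_mult (fa_prod (rev (map (\<lambda>(j,b). SH N j b) (zip v B)))) (Y i v))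
   = \<beta> i v * prod_list (map (\<lambda>(j,b). ev \<beta> (SH N j b)) (zip v B))"
  by (simp add: ev_prod_rev ev_Y o_def case_prod_unfold)

lemma sigma_long:
  assumes "2 \<le> length u"
  shows "ev \<beta> (SH N i u) = - (\<Sum>q\<in>{q. q \<le> length u \<and> 2 \<le> q}. \<Sum>w\<in>Wd N q. \<beta> i w * P (\<lambda>j b. ev \<beta> (SH N j b)) w u)"
proof -
  let ?\<sigma> = "\<lambda>j b. ev \<beta> (SH N j b)"
  have "ev \<beta> (SH N i u) = - sum_list (map (\<lambda>ls. sum_list (map (\<lambda>w. \<beta> i w * prod_list (map (\<lambda>(j,b). ?\<sigma> j b) (zip w (blocks ls u))))
       (words N (length ls)))) (filter (\<lambda>ls. 2 \<le> length ls) (comps (length u))))"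
    apply (simp only: SH_long[OF assms] ev_neg ev_concat map_map)
    apply (rule arg_cong[where f="\<lambda>x. - x"], rule arg_cong[where f=sum_list], rule map_cong[OF refl])
    apply (simp only: o_def ev_concat map_map)
    apply (rule arg_cong[where f=sum_list], rule map_cong[OF refl])
    apply (frule words_len)
    apply (simp add: ev_prod_rev ev_Y o_def case_prod_unfold)
    done
  also have "\<dots> = - (\<Sum>q\<in>{q. q \<le> length u \<and> 2 \<le> q}. \<Sum>w\<in>Wd N q. \<beta> i w * P ?\<sigma> w u)"
    by (subst lemma_G) (rule refl)
  finally show ?thesis .
qed

lemma sigma_short: "length u < 2 \<Longrightarrow> ev \<beta> (SH N i u) = (if u = [i] then 1 else 0)"
  by (simp add: SH_short ev_Y)

lemma sigma_single: "ev \<beta> (SH N k [b]) = (if b = k then 1 else 0)"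
  by (simp add: sigma_short)

lemma sigma_nil: "ev \<beta> (SH N k []) = 0"
  by (simp add: sigma_short)

lemma CS_a:
  assumes G: "Gdif N \<beta>" and i: "i \<in> {1..N}"
  shows "(\<Sum>w\<in>WS N (length u). \<beta> i w * P (\<lambda>j b. ev \<beta> (SH N j b)) w u) = idc i u"
proof -
  let ?\<sigma> = "\<lambda>j b. ev \<beta> (SH N j b)"
  let ?X = "\<lambda>q. \<Sum>w\<in>Wd N q. \<beta> i w * P ?\<sigma> w u"
  have b0: "\<beta> i [] = 0" and b1: "\<And>k. k \<in> {1..N} \<Longrightarrow> \<beta> i [k] = (if i = k then 1 else 0)"
    using G i by (auto simp: Gdif_def)
  have X0: "?X 0 = 0" by (simp add: Wd0 b0)
  have X1: "u \<noteq> [] \<Longrightarrow> ?X 1 = ?\<sigma> i u"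
  proof -
    assume u: "u \<noteq> []"
    have "?X 1 = (\<Sum>k\<in>{1..N}. \<beta> i [k] * ?\<sigma> k u)" by (subst Wd1_sum) (simp add: P_single u)
    also have "\<dots> = (\<Sum>k\<in>{1..N}. if k = i then ?\<sigma> k u else 0)"
      by (rule sum.cong) (auto simp: b1)
    also have "\<dots> = ?\<sigma> i u" using i by simp
    finally show ?thesis .
  qed
  have "(\<Sum>w\<in>WS N (length u). \<beta> i w * P ?\<sigma> w u) = (\<Sum>q\<in>{..length u}. ?X q)"
    by (rule WS_group)
  also have "\<dots> = idc i u"
  proof (cases "u = []")
    case True then show ?thesis using X0 by (simp add: idc_def)
  next
    case False
    have split: "{..length u} = insert 0 (insert 1 {q. q \<le> length u \<and> 2 \<le> q})"
      using False by (auto simp: le_Suc_eq Suc_le_eq)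
    have "(\<Sum>q\<in>{..length u}. ?X q) = ?X 0 + (?X 1 + (\<Sum>q\<in>{q. q \<le> length u \<and> 2 \<le> q}. ?X q))"
      by (simp add: split)
    also have "\<dots> = ?\<sigma> i u + (\<Sum>q\<in>{q. q \<le> length u \<and> 2 \<le> q}. ?X q)" using X0 X1 False by simp
    also have "\<dots> = idc i u"
    proof (cases "2 \<le> length u")
      case True
      then show ?thesis using sigma_long[OF True, of \<beta> N i] by (auto simp: idc_def)
    next
      case False
      then have e: "{q. q \<le> length u \<and> 2 \<le> q} = {}" by auto
      have "?\<sigma> i u = idc i u" using False by (simp add: sigma_short idc_def)
      then show ?thesis by (simp only: e sum.empty add_0_right)
    qed
    finally show ?thesis .
  qed
  finally show ?thesis .
qed



definition RP :: "(nat \<Rightarrow> nat list \<Rightarrow> 'a::ring_1) \<Rightarrow> nat list \<Rightarrow> nat list \<Rightarrow> 'a" where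
  "RP \<gamma> x u = P (\<lambda>i y. \<gamma> i (rev y)) (rev x) (rev u)"

lemma RP_Nil: "RP \<gamma> [] u = (if u = [] then 1 else 0)"
  by (simp add: RP_def)

lemma RP_zero: "length u < length x \<Longrightarrow> RP \<gamma> x u = 0"
  by (simp add: RP_def P_zero)

lemma RP_Cons: "RP \<gamma> (a # x) u = (\<Sum>k\<in>{1..length u}. RP \<gamma> x (drop k u) * \<gamma> a (take k u))"
proof -
  define n where "n = length u"
  let ?\<alpha> = "\<lambda>i y. \<gamma> i (rev y)"
  let ?F = "\<lambda>k. RP \<gamma> x (drop k u) * (if take k u = [] then 0 else \<gamma> a (take k u))"
  have "RP \<gamma> (a # x) u = P ?\<alpha> (rev x @ [a]) (rev u)" by (simp add: RP_def)
  also have "\<dots> = (\<Sum>m\<in>{0..n}. P ?\<alpha> (rev x) (take m (rev u)) * P ?\<alpha> [a] (drop m (rev u)))"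
    by (simp add: P_append n_def)
  also have "\<dots> = (\<Sum>m\<in>{0..n}. ?F (n - m))"
  proof (rule sum.cong[OF refl])
    fix m assume m: "m \<in> {0..n}"
    have "P ?\<alpha> (rev x) (take m (rev u)) = RP \<gamma> x (drop (n - m) u)"
      by (simp add: RP_def take_rev n_def)
    moreover have "P ?\<alpha> [a] (drop m (rev u)) = (if take (n - m) u = [] then 0 else \<gamma> a (take (n - m) u))"
      by (simp add: P_single' drop_rev n_def)
    ultimately show "P ?\<alpha> (rev x) (take m (rev u)) * P ?\<alpha> [a] (drop m (rev u)) = ?F (n - m)" by simp
  qed
  also have "\<dots> = (\<Sum>k\<in>{0..n}. ?F k)"
    by (rule sum.reindex_bij_witness[where i="\<lambda>k. n - k" and j="\<lambda>k. n - k"]) auto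
  also have "\<dots> = ?F 0 + (\<Sum>k\<in>{1..n}. ?F k)"
    by (simp add: sum.atLeast_Suc_atMost)
  also have "\<dots> = (\<Sum>k\<in>{1..n}. RP \<gamma> x (drop k u) * \<gamma> a (take k u))"
    by (auto intro!: sum.cong simp: n_def)
  finally show ?thesis by (simp add: n_def)
qed

lemma WS_mono: "B1 \<le> B2 \<Longrightarrow> WS N B1 \<subseteq> WS N B2" by (auto simp: WS_def)

lemma P_zero_WS: "w \<in> WS N B - WS N n \<Longrightarrow> length u \<le> n \<Longrightarrow> P \<alpha> w u = 0"
  by (rule P_zero) (auto simp: WS_def)

lemma CS_aB:
  assumes G: "Gdif N \<beta>" and i: "i \<in> {1..N}" and B: "length u \<le> B"
  shows "(\<Sum>w\<in>WS N B. \<beta> i w * P (\<lambda>j b. ev \<beta> (SH N j b)) w u) = idc i u"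
proof -
  have "(\<Sum>w\<in>WS N B. \<beta> i w * P (\<lambda>j b. ev \<beta> (SH N j b)) w u)
      = (\<Sum>w\<in>WS N (length u). \<beta> i w * P (\<lambda>j b. ev \<beta> (SH N j b)) w u)"
  proof (rule sum.mono_neutral_right[OF finite_WS])
    show "WS N (length u) \<subseteq> WS N B" using B by (rule WS_mono)
    show "\<forall>w\<in>WS N B - WS N (length u). \<beta> i w * P (\<lambda>j b. ev \<beta> (SH N j b)) w u = 0"
      by (auto simp: P_zero_WS)
  qed
  then show ?thesis using CS_a[OF G i] by simp
qed



lemma lemma_b:
  assumes G: "Gdif N \<beta>" and x: "set x \<subseteq> {1..N}" and B: "length u \<le> B"
  shows "(\<Sum>w\<in>WS N B. RP \<beta> x w * P (\<lambda>j b. ev \<beta> (SH N j b)) w u) = (if x = u then 1 else 0)"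
  using x B
proof (induction x arbitrary: u)
  case Nil
  let ?\<sigma> = "\<lambda>j b. ev \<beta> (SH N j b)"
  have "(\<Sum>w\<in>WS N B. RP \<beta> [] w * P ?\<sigma> w u) = (\<Sum>w\<in>WS N B. if w = [] then P ?\<sigma> w u else 0)"
    by (rule sum.cong) (auto simp: RP_Nil)
  also have "\<dots> = P ?\<sigma> [] u" by (simp only: sum.delta[OF finite_WS]) (simp add: WS_def)
  finally show ?case by auto
next
  case (Cons a x)
  let ?\<sigma> = "\<lambda>j b. ev \<beta> (SH N j b)"
  have a: "a \<in> {1..N}" and xN: "set x \<subseteq> {1..N}" using Cons.prems by auto
  have ba: "\<beta> a [] = 0" using G a by (auto simp: Gdif_def)
  let ?F = "\<lambda>w1 w2. RP \<beta> x w2 * \<beta> a w1 * P ?\<sigma> (w1 @ w2) u"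
  define W1 where "W1 = {w1\<in>WS N B. w1 \<noteq> []}"
  have finW1: "finite W1" by (simp add: W1_def)
  have "(\<Sum>w\<in>WS N B. RP \<beta> (a # x) w * P ?\<sigma> w u)
      = (\<Sum>w\<in>WS N B. \<Sum>k\<in>{1..length w}. ?F (take k w) (drop k w))"
    by (rule sum.cong[OF refl]) (simp add: RP_Cons sum_distrib_right)
  also have "\<dots> = (\<Sum>(w,k)\<in>Sigma (WS N B) (\<lambda>w. {1..length w}). ?F (take k w) (drop k w))"
    by (rule sum.Sigma) auto
  also have "\<dots> = (\<Sum>(w1,w2)\<in>Sigma W1 (\<lambda>w1. WS N (B - length w1)). ?F w1 w2)"
    by (rule sum.reindex_bij_witness[where i="\<lambda>(w1,w2). (w1 @ w2, length w1)" and j="\<lambda>(w,k). (take k w, drop k w)"])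
       (auto simp: W1_def WS_def min_def subset_iff Suc_le_eq dest: in_set_takeD in_set_dropD)
  also have "\<dots> = (\<Sum>w1\<in>W1. \<Sum>w2\<in>WS N (B - length w1). ?F w1 w2)"
    by (rule sum.Sigma[symmetric]) (auto simp: finW1)
  also have "\<dots> = (\<Sum>w1\<in>W1. \<Sum>w2\<in>WS N B. ?F w1 w2)"
  proof (rule sum.cong[OF refl])
    fix w1 assume "w1 \<in> W1"
    show "(\<Sum>w2\<in>WS N (B - length w1). ?F w1 w2) = (\<Sum>w2\<in>WS N B. ?F w1 w2)"
    proof (rule sum.mono_neutral_left[OF finite_WS])
      show "WS N (B - length w1) \<subseteq> WS N B" by (rule WS_mono) simp
      show "\<forall>w2\<in>WS N B - WS N (B - length w1). ?F w1 w2 = 0"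
      proof
        fix w2 assume "w2 \<in> WS N B - WS N (B - length w1)"
        then have "length u < length (w1 @ w2)" using Cons.prems by (auto simp: WS_def)
        then show "?F w1 w2 = 0" by (simp add: P_zero)
      qed
    qed
  qed
  also have "\<dots> = (\<Sum>w1\<in>W1. \<Sum>w2\<in>WS N B. \<Sum>m\<in>{0..length u}.
        RP \<beta> x w2 * (\<beta> a w1 * P ?\<sigma> w1 (take m u)) * P ?\<sigma> w2 (drop m u))"
    by (simp add: P_append sum_distrib_left mult.assoc)
  also have "\<dots> = (\<Sum>m\<in>{0..length u}. \<Sum>w2\<in>WS N B. \<Sum>w1\<in>W1.
        RP \<beta> x w2 * (\<beta> a w1 * P ?\<sigma> w1 (take m u)) * P ?\<sigma> w2 (drop m u))"
  proof -
    let ?G = "\<lambda>w1 w2 m. RP \<beta> x w2 * (\<beta> a w1 * P ?\<sigma> w1 (take m u)) * P ?\<sigma> w2 (drop m u)"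
    have "(\<Sum>w1\<in>W1. \<Sum>w2\<in>WS N B. \<Sum>m\<in>{0..length u}. ?G w1 w2 m)
        = (\<Sum>w2\<in>WS N B. \<Sum>w1\<in>W1. \<Sum>m\<in>{0..length u}. ?G w1 w2 m)"
      by (rule sum.swap)
    also have "\<dots> = (\<Sum>w2\<in>WS N B. \<Sum>m\<in>{0..length u}. \<Sum>w1\<in>W1. ?G w1 w2 m)"
      by (rule sum.cong[OF refl], rule sum.swap)
    also have "\<dots> = (\<Sum>m\<in>{0..length u}. \<Sum>w2\<in>WS N B. \<Sum>w1\<in>W1. ?G w1 w2 m)"
      by (rule sum.swap)
    finally show ?thesis .
  qed
  also have "\<dots> = (\<Sum>m\<in>{0..length u}. \<Sum>w2\<in>WS N B.
        RP \<beta> x w2 * (\<Sum>w1\<in>W1. \<beta> a w1 * P ?\<sigma> w1 (take m u)) * P ?\<sigma> w2 (drop m u))"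
    by (simp add: sum_distrib_left sum_distrib_right)
  also have "\<dots> = (\<Sum>m\<in>{0..length u}. \<Sum>w2\<in>WS N B.
        RP \<beta> x w2 * idc a (take m u) * P ?\<sigma> w2 (drop m u))"
  proof (intro sum.cong refl)
    fix m assume m: "m \<in> {0..length u}"
    have "(\<Sum>w1\<in>WS N B. \<beta> a w1 * P ?\<sigma> w1 (take m u)) = idc a (take m u)"
      using Cons.prems by (intro CS_aB[OF G a]) auto
    moreover have "(\<Sum>w1\<in>WS N B. \<beta> a w1 * P ?\<sigma> w1 (take m u))
        = (\<Sum>w1\<in>W1. \<beta> a w1 * P ?\<sigma> w1 (take m u))"
      by (rule sum.mono_neutral_right[OF finite_WS]) (auto simp: W1_def ba)
    ultimately have "(\<Sum>w1\<in>W1. \<beta> a w1 * P ?\<sigma> w1 (take m u)) = idc a (take m u)" by simp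
    then show "\<And>w2. RP \<beta> x w2 * (\<Sum>w1\<in>W1. \<beta> a w1 * P ?\<sigma> w1 (take m u)) * P ?\<sigma> w2 (drop m u)
        = RP \<beta> x w2 * idc a (take m u) * P ?\<sigma> w2 (drop m u)" by simp
  qed
  also have "\<dots> = (\<Sum>m\<in>{0..length u}. if m = 1 \<and> u \<noteq> [] \<and> hd u = a then
        (\<Sum>w2\<in>WS N B. RP \<beta> x w2 * P ?\<sigma> w2 (tl u)) else 0)"
  proof (rule sum.cong[OF refl])
    fix m assume m: "m \<in> {0..length u}"
    have eq: "(take m u = [a]) = (m = 1 \<and> u \<noteq> [] \<and> hd u = a)"
      using m by (cases u; cases m) auto
    show "(\<Sum>w2\<in>WS N B. RP \<beta> x w2 * idc a (take m u) * P ?\<sigma> w2 (drop m u))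
        = (if m = 1 \<and> u \<noteq> [] \<and> hd u = a then (\<Sum>w2\<in>WS N B. RP \<beta> x w2 * P ?\<sigma> w2 (tl u)) else 0)"
      by (auto simp: idc_def eq drop_Suc)
  qed
  also have "\<dots> = (if u \<noteq> [] \<and> hd u = a then (\<Sum>w2\<in>WS N B. RP \<beta> x w2 * P ?\<sigma> w2 (tl u)) else 0)"
    by (cases u) (auto simp: sum.delta Suc_le_eq)
  also have "\<dots> = (if a # x = u then 1 else 0)"
  proof (cases "u \<noteq> [] \<and> hd u = a")
    case True
    have "length (tl u) \<le> B" using Cons.prems by simp
    then have "(\<Sum>w2\<in>WS N B. RP \<beta> x w2 * P ?\<sigma> w2 (tl u)) = (if x = tl u then 1 else 0)"
      using Cons.IH xN by blast
    then show ?thesis using True by (cases u) auto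
  next
    case False
    then show ?thesis by auto
  qed
  finally show ?case .
qed



definition Rsum :: "nat \<Rightarrow> (nat \<Rightarrow> nat list \<Rightarrow> 'a::ring_1) \<Rightarrow> nat \<Rightarrow> nat list \<Rightarrow> 'a" where
  "Rsum N \<beta> j u = (\<Sum>x\<in>WS N (length u). ev \<beta> (SH N j x) * RP \<beta> x u)"

lemma prod_delta: "length w = length u \<Longrightarrow>
  prod_list (map2 (\<lambda>a b. if b = a then (1::'a::ring_1) else 0) w u) = (if w = u then 1 else 0)"
proof (induction w arbitrary: u)
  case Nil then show ?case by simp
next
  case (Cons a w)
  then obtain b u' where "u = b # u'" by (cases u) auto
  with Cons show ?case by auto
qed

lemma lemma_c:
  assumes G: "Gdif N \<beta>" and j: "j \<in> {1..N}"
  shows "set u \<subseteq> {1..N} \<Longrightarrow> Rsum N \<beta> j u = idc j u"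
proof (induction "length u" arbitrary: u rule: less_induct)
  case less
  let ?\<sigma> = "\<lambda>j b. ev \<beta> (SH N j b)"
  define B where "B = length u"
  have uWS: "u \<in> WS N B" using less.prems by (simp add: WS_def B_def)
  define T where "T = (\<Sum>x\<in>WS N B. ?\<sigma> j x * (\<Sum>w\<in>WS N B. RP \<beta> x w * P ?\<sigma> w u))"
  have T1: "T = ?\<sigma> j u"
  proof -
    have "T = (\<Sum>x\<in>WS N B. ?\<sigma> j x * (if x = u then 1 else 0))"
      unfolding T_def
    proof (rule sum.cong[OF refl])
      fix x assume "x \<in> WS N B"
      then have "set x \<subseteq> {1..N}" by (simp add: WS_def)
      then show "?\<sigma> j x * (\<Sum>w\<in>WS N B. RP \<beta> x w * P ?\<sigma> w u) = ?\<sigma> j x * (if x = u then 1 else 0)"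
        using lemma_b[OF G, of x u B] by (simp add: B_def)
    qed
    also have "\<dots> = (\<Sum>x\<in>WS N B. if x = u then ?\<sigma> j x else 0)"
      by (rule sum.cong) auto
    also have "\<dots> = ?\<sigma> j u" using uWS by (simp add: sum.delta[OF finite_WS])
    finally show ?thesis .
  qed
  have T2: "T = (\<Sum>w\<in>WS N B. Rsum N \<beta> j w * P ?\<sigma> w u)"
  proof -
    have "T = (\<Sum>x\<in>WS N B. \<Sum>w\<in>WS N B. ?\<sigma> j x * RP \<beta> x w * P ?\<sigma> w u)"
      by (simp add: T_def sum_distrib_left mult.assoc)
    also have "\<dots> = (\<Sum>w\<in>WS N B. \<Sum>x\<in>WS N B. ?\<sigma> j x * RP \<beta> x w * P ?\<sigma> w u)"
      by (rule sum.swap)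
    also have "\<dots> = (\<Sum>w\<in>WS N B. (\<Sum>x\<in>WS N B. ?\<sigma> j x * RP \<beta> x w) * P ?\<sigma> w u)"
      by (simp add: sum_distrib_right)
    also have "\<dots> = (\<Sum>w\<in>WS N B. Rsum N \<beta> j w * P ?\<sigma> w u)"
    proof (rule sum.cong[OF refl])
      fix w assume w: "w \<in> WS N B"
      have "(\<Sum>x\<in>WS N B. ?\<sigma> j x * RP \<beta> x w) = Rsum N \<beta> j w"
        unfolding Rsum_def
      proof (rule sum.mono_neutral_right[OF finite_WS])
        show "WS N (length w) \<subseteq> WS N B" using w by (intro WS_mono) (simp add: WS_def)
        show "\<forall>x\<in>WS N B - WS N (length w). ?\<sigma> j x * RP \<beta> x w = 0"
        proof
          fix x assume "x \<in> WS N B - WS N (length w)"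
          then have "length w < length x" by (auto simp: WS_def)
          then show "?\<sigma> j x * RP \<beta> x w = 0" by (simp add: RP_zero)
        qed
      qed
      then show "(\<Sum>x\<in>WS N B. ?\<sigma> j x * RP \<beta> x w) * P ?\<sigma> w u = Rsum N \<beta> j w * P ?\<sigma> w u" by simp
    qed
    finally show ?thesis .
  qed
  show ?case
  proof (cases "B = 0")
    case True
    then have "u = []" by (simp add: B_def)
    have "WS N 0 = {[]}" by (auto simp: WS_def)
    then have "T = Rsum N \<beta> j []" using T2 True \<open>u = []\<close> by simp
    then show ?thesis using T1 \<open>u = []\<close> by (simp add: sigma_nil idc_def)
  next
    case False
    have split: "WS N B = WS N (B - 1) \<union> Wd N B" using False by (auto simp: WS_def Wd_def)
    have disj: "WS N (B - 1) \<inter> Wd N B = {}" using False by (auto simp: WS_def Wd_def; arith)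
    have part2: "(\<Sum>w\<in>Wd N B. Rsum N \<beta> j w * P ?\<sigma> w u) = Rsum N \<beta> j u"
    proof -
      have "(\<Sum>w\<in>Wd N B. Rsum N \<beta> j w * P ?\<sigma> w u) = (\<Sum>w\<in>Wd N B. if w = u then Rsum N \<beta> j w else 0)"
      proof (rule sum.cong[OF refl])
        fix w assume "w \<in> Wd N B"
        then have l: "length w = length u" by (simp add: Wd_def B_def)
        have "P ?\<sigma> w u = prod_list (map2 (\<lambda>a b. if b = a then 1 else 0) w u)"
          by (simp add: P_diag[OF l] sigma_single)
        then show "Rsum N \<beta> j w * P ?\<sigma> w u = (if w = u then Rsum N \<beta> j w else 0)"
          by (simp add: prod_delta[OF l])
      qed
      also have "\<dots> = Rsum N \<beta> j u" using less.prems by (simp only: sum.delta[OF finite_Wd]) (simp add: Wd_def B_def)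
      finally show ?thesis .
    qed
    have part1: "(\<Sum>w\<in>WS N (B - 1). Rsum N \<beta> j w * P ?\<sigma> w u) = (if 2 \<le> B then ?\<sigma> j u else 0)"
    proof -
      have "(\<Sum>w\<in>WS N (B - 1). Rsum N \<beta> j w * P ?\<sigma> w u) = (\<Sum>w\<in>WS N (B - 1). if w = [j] then P ?\<sigma> w u else 0)"
      proof (rule sum.cong[OF refl])
        fix w assume w: "w \<in> WS N (B - 1)"
        have l: "length w \<le> B - 1" using w by (simp add: WS_def)
        have "length w < length u" using l False B_def by arith
        moreover have "set w \<subseteq> {1..N}" using w by (simp add: WS_def)
        ultimately have "Rsum N \<beta> j w = idc j w" using less.hyps by blast
        then show "Rsum N \<beta> j w * P ?\<sigma> w u = (if w = [j] then P ?\<sigma> w u else 0)" by (simp add: idc_def)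
      qed
      also have "\<dots> = (if [j] \<in> WS N (B - 1) then P ?\<sigma> [j] u else 0)"
        by (simp add: sum.delta[OF finite_WS])
      also have "\<dots> = (if 2 \<le> B then ?\<sigma> j u else 0)"
        using j False by (auto simp: WS_def P_single B_def)
      finally show ?thesis .
    qed
    have "?\<sigma> j u = (if 2 \<le> B then ?\<sigma> j u else 0) + Rsum N \<beta> j u"
      using T1 T2 split disj part1 part2 by (simp add: sum.union_disjoint)
    then show ?thesis
    proof (cases "2 \<le> B")
      case True
      then show ?thesis using \<open>?\<sigma> j u = _\<close> by (auto simp: idc_def B_def)
    next
      case False
      then show ?thesis using \<open>?\<sigma> j u = _\<close> by (simp add: sigma_short B_def idc_def)
    qed
  qed
qed



lemma gL_eq: "pairing (S_L N (Y j v)) f = ev (\<lambda>i u. f i (rev u)) (SH N j (rev v))"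
proof -
  have "pairing (S_L N (Y j v)) f = ev (\<lambda>i u. f i (rev u)) (SH_ext N (s_map (Y j v)))"
    by (simp add: S_L_def pairing_s)
  also have "\<dots> = ev (\<lambda>i u. f i (rev u)) (SH N j (rev v))"
    by (auto simp: ev_SH_ext Y_def s_map_def fa_one_def sigma_short)
  finally show ?thesis .
qed

lemma hR_eq: "pairing (S_R N (Y j v)) f = ev f (SH N j v)"
proof -
  have "pairing (S_R N (Y j v)) f = ev f (SH_ext N (t_map (Y j v)))"
    by (simp add: S_R_def pairing_t)
  also have "\<dots> = ev f (SH N j v)"
    by (auto simp: ev_SH_ext Y_def t_map_def fa_one_def sigma_short)
  finally show ?thesis .
qed

lemma Gdif_sigma: "Gdif N (\<lambda>j v. ev \<beta> (SH N j v))"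
  by (simp add: Gdif_def sigma_nil sigma_single)

lemma Gdif_sigma_rev: "Gdif N (\<lambda>j v. ev \<beta> (SH N j (rev v)))"
  by (simp add: Gdif_def sigma_nil sigma_single)

lemma Gdif_rev: "Gdif N f \<Longrightarrow> Gdif N (\<lambda>i u. f i (rev u))"
  by (simp add: Gdif_def)

lemma LEFT:
  assumes G: "Gdif N f" and j: "j \<in> {1..N}" and v: "set v \<subseteq> {1..N}"
  shows "comp N (\<lambda>j v. ev (\<lambda>i u. f i (rev u)) (SH N j (rev v))) f j v = idc j v"
proof -
  let ?\<beta> = "\<lambda>i u. f i (rev u)"
  have "comp N (\<lambda>j v. ev ?\<beta> (SH N j (rev v))) f j v = (\<Sum>w\<in>WS N (length v). ev ?\<beta> (SH N j (rev w)) * P f w v)"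
    by (rule comp_CS)
  also have "\<dots> = (\<Sum>x\<in>WS N (length v). ev ?\<beta> (SH N j x) * RP ?\<beta> x (rev v))"
    by (rule sum.reindex_bij_witness[where i=rev and j=rev]) (auto simp: WS_def RP_def)
  also have "\<dots> = Rsum N ?\<beta> j (rev v)" by (simp add: Rsum_def)
  also have "\<dots> = idc j (rev v)" using lemma_c[OF Gdif_rev[OF G] j] v by simp
  also have "\<dots> = idc j v" by (auto simp: idc_def)
  finally show ?thesis .
qed

lemma RIGHT:
  assumes G: "Gdif N f" and j: "j \<in> {1..N}"
  shows "comp N f (\<lambda>j v. ev f (SH N j v)) j v = idc j v"
  using CS_a[OF G j] by (simp add: comp_CS)

lemma P_cong:
  "(\<forall>j\<in>set w. \<forall>b. b \<noteq> [] \<and> set b \<subseteq> set u \<and> length b + length w \<le> length u + 1 \<longrightarrow> \<alpha> j b = \<gamma> j b)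
   \<Longrightarrow> P \<alpha> w u = P \<gamma> w u"
proof (induction w arbitrary: u)
  case Nil then show ?case by simp
next
  case (Cons a w)
  show ?case
    unfolding P.simps(2)
  proof (rule sum.cong[OF refl])
    fix k assume k: "k \<in> {1..length u}"
    show "\<alpha> a (take k u) * P \<alpha> w (drop k u) = \<gamma> a (take k u) * P \<gamma> w (drop k u)"
    proof (cases "k + length w \<le> length u")
      case True
      have "take k u \<noteq> []" using k by auto
      moreover have "set (take k u) \<subseteq> set u" by (rule set_take_subset)
      moreover have "length (take k u) + length (a # w) \<le> length u + 1" using True k by simp
      ultimately have "\<alpha> a (take k u) = \<gamma> a (take k u)"
        using Cons.prems[rule_format, of a "take k u"] by simp
      moreover have "P \<alpha> w (drop k u) = P \<gamma> w (drop k u)"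
      proof (rule Cons.IH, intro ballI allI impI)
        fix j b assume jb: "j \<in> set w" "b \<noteq> [] \<and> set b \<subseteq> set (drop k u) \<and> length b + length w \<le> length (drop k u) + 1"
        then have "set b \<subseteq> set u" by (auto dest: in_set_dropD)
        then show "\<alpha> j b = \<gamma> j b" using Cons.prems jb k by auto
      qed
      ultimately show ?thesis by simp
    next
      case False
      then have "length (drop k u) < length w" using k by auto
      then show ?thesis by (simp add: P_zero)
    qed
  qed
qed

lemma delta_prod:
  assumes G: "Gdif N f" and w: "set w \<subseteq> {1..N}" and v: "set v \<subseteq> {1..N}" and l: "length w = length v"
  shows "P f w v = (if w = v then 1 else 0)"
proof -
  have "P f w v = prod_list (map2 (\<lambda>a b. f a [b]) w v)" by (rule P_diag[OF l])
  also have "\<dots> = prod_list (map2 (\<lambda>a b. if b = a then 1 else 0) w v)"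
  proof (rule arg_cong[where f=prod_list], rule map_cong[OF refl])
    fix x assume x: "x \<in> set (zip w v)"
    obtain a b where ab: "x = (a,b)" by (cases x)
    have "a \<in> set w" "b \<in> set v" using x ab by (auto dest: set_zip_leftD set_zip_rightD)
    then have "a \<in> {1..N}" "b \<in> {1..N}" using w v by auto
    then show "(\<lambda>(a, b). f a [b]) x = (\<lambda>(a, b). if b = a then 1 else 0) x"
      using G ab by (auto simp: Gdif_def)
  qed
  also have "\<dots> = (if w = v then 1 else 0)" by (rule prod_delta[OF l])
  finally show ?thesis .
qed

lemma split_compL:
  assumes G: "Gdif N f" and v: "set v \<subseteq> {1..N}" and ne: "v \<noteq> []"
  shows "comp N g f j v = (\<Sum>w\<in>WS N (length v - 1). g j w * P f w v) + g j v"
proof -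
  obtain n where n: "length v = Suc n" using ne by (cases v) auto
  have split: "WS N (length v) = WS N (length v - 1) \<union> Wd N (length v)" using n by (auto simp: WS_def Wd_def le_Suc_eq)
  have disj: "WS N (length v - 1) \<inter> Wd N (length v) = {}" using n by (auto simp: WS_def Wd_def)
  have "(\<Sum>w\<in>Wd N (length v). g j w * P f w v) = (\<Sum>w\<in>Wd N (length v). if w = v then g j w else 0)"
  proof (rule sum.cong[OF refl])
    fix w assume "w \<in> Wd N (length v)"
    then have "set w \<subseteq> {1..N}" "length w = length v" by (auto simp: Wd_def)
    then show "g j w * P f w v = (if w = v then g j w else 0)" using delta_prod[OF G _ v] by simp
  qed
  also have "\<dots> = g j v" using v by (simp only: sum.delta[OF finite_Wd]) (simp add: Wd_def)
  finally have "(\<Sum>w\<in>Wd N (length v). g j w * P f w v) = g j v" .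
  then show ?thesis using split disj by (simp add: comp_CS sum.union_disjoint)
qed

lemma UNIQ_L:
  assumes G: "Gdif N f" and G1: "Gdif N g1" and G2: "Gdif N g2"
    and C: "\<forall>i\<in>{1..N}. \<forall>u. set u \<subseteq> {1..N} \<longrightarrow> comp N g1 f i u = comp N g2 f i u"
    and j: "j \<in> {1..N}"
  shows "set v \<subseteq> {1..N} \<Longrightarrow> g1 j v = g2 j v"
proof (induction "length v" arbitrary: v rule: less_induct)
  case less
  show ?case
  proof (cases "v = []")
    case True then show ?thesis using G1 G2 j by (simp add: Gdif_def)
  next
    case False
    have eq: "(\<Sum>w\<in>WS N (length v - 1). g1 j w * P f w v) = (\<Sum>w\<in>WS N (length v - 1). g2 j w * P f w v)"
    proof (rule sum.cong[OF refl])
      fix w assume w: "w \<in> WS N (length v - 1)"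
      have l: "length w \<le> length v - 1" using w by (simp add: WS_def)
      have "length w < length v" using l False by (cases v) auto
      moreover have "set w \<subseteq> {1..N}" using w by (simp add: WS_def)
      ultimately have "g1 j w = g2 j w" using less.hyps by blast
      then show "g1 j w * P f w v = g2 j w * P f w v" by simp
    qed
    have "comp N g1 f j v = comp N g2 f j v" using C j less.prems by blast
    then show ?thesis using split_compL[OF G less.prems False, of g1 j] split_compL[OF G less.prems False, of g2 j] eq
      by simp
  qed
qed

lemma split_compR:
  assumes G: "Gdif N f" and j: "j \<in> {1..N}" and ne: "v \<noteq> []"
  shows "comp N f h j v = (\<Sum>w\<in>WS N (length v) - Wd N 1. f j w * P h w v) + h j v"
proof -
  have sub: "Wd N 1 \<subseteq> WS N (length v)" using ne by (auto simp: WS_def Wd_def Suc_le_eq)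
  have "(\<Sum>w\<in>Wd N 1. f j w * P h w v) = (\<Sum>k\<in>{1..N}. f j [k] * P h [k] v)" by (rule Wd1_sum)
  also have "\<dots> = (\<Sum>k\<in>{1..N}. if k = j then h k v else 0)"
    by (rule sum.cong[OF refl]) (use G j ne in \<open>auto simp: Gdif_def P_single\<close>)
  also have "\<dots> = h j v" using j by simp
  finally have "(\<Sum>w\<in>Wd N 1. f j w * P h w v) = h j v" .
  then show ?thesis
    using sum.subset_diff[OF sub finite_WS, of "\<lambda>w. f j w * P h w v"] by (simp add: comp_CS)
qed

lemma UNIQ_R:
  assumes G: "Gdif N f" and G1: "Gdif N h1" and G2: "Gdif N h2"
    and C: "\<forall>i\<in>{1..N}. \<forall>u. set u \<subseteq> {1..N} \<longrightarrow> comp N f h1 i u = comp N f h2 i u"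
  shows "set v \<subseteq> {1..N} \<Longrightarrow> \<forall>j\<in>{1..N}. h1 j v = h2 j v"
proof (induction "length v" arbitrary: v rule: less_induct)
  case less
  show ?case
  proof
    fix j assume j: "j \<in> {1..N}"
    show "h1 j v = h2 j v"
    proof (cases "v = []")
      case True then show ?thesis using G1 G2 j by (simp add: Gdif_def)
    next
      case False
      have eq: "(\<Sum>w\<in>WS N (length v) - Wd N 1. f j w * P h1 w v) = (\<Sum>w\<in>WS N (length v) - Wd N 1. f j w * P h2 w v)"
      proof (rule sum.cong[OF refl])
        fix w assume w: "w \<in> WS N (length v) - Wd N 1"
        show "f j w * P h1 w v = f j w * P h2 w v"
        proof (cases "w = []")
          case True then show ?thesis by simp
        next
          case False
          then have w2: "2 \<le> length w" and wN: "set w \<subseteq> {1..N}" using w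
            by (auto simp: WS_def Wd_def) (cases w; auto simp: Suc_le_eq)
          have "P h1 w v = P h2 w v"
          proof (rule P_cong, intro ballI allI impI)
            fix i b assume ib: "i \<in> set w" "b \<noteq> [] \<and> set b \<subseteq> set v \<and> length b + length w \<le> length v + 1"
            then have "length b < length v" "set b \<subseteq> {1..N}" "i \<in> {1..N}" using w2 wN less.prems by auto
            then show "h1 i b = h2 i b" using less.hyps by blast
          qed
          then show ?thesis by simp
        qed
      qed
      have "comp N f h1 j v = comp N f h2 j v" using C j less.prems by blast
      then show ?thesis using split_compR[OF G j False, of h1] split_compR[OF G j False, of h2] eq by simp
    qed
  qed
qed



theorem theorem11:
  fixes N :: nat and f :: "nat \<Rightarrow> nat list \<Rightarrow> 'a::ring_1"
  assumes "Gdif N f"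
  shows "Gdif N (\<lambda>j v. pairing (S_L N (Y j v)) f)
       \<and> (\<forall>g. Gdif N g \<longrightarrow>
            ((\<forall>i\<in>{1..N}. \<forall>u\<in>words_over N. comp N g f i u = idc i u)
             \<longleftrightarrow> (\<forall>j\<in>{1..N}. \<forall>v\<in>words_over N. g j v = pairing (S_L N (Y j v)) f)))
     \<and> Gdif N (\<lambda>j v. pairing (S_R N (Y j v)) f)
       \<and> (\<forall>h. Gdif N h \<longrightarrow>
            ((\<forall>i\<in>{1..N}. \<forall>u\<in>words_over N. comp N f h i u = idc i u)
             \<longleftrightarrow> (\<forall>j\<in>{1..N}. \<forall>v\<in>words_over N. h j v = pairing (S_R N (Y j v)) f)))"
proof -
  let ?gL = "\<lambda>j v. pairing (S_L N (Y j v)) f"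
  let ?hR = "\<lambda>j v. pairing (S_R N (Y j v)) f"
  have gL: "?gL = (\<lambda>j v. ev (\<lambda>i u. f i (rev u)) (SH N j (rev v)))" by (intro ext) (simp add: gL_eq)
  have hR: "?hR = (\<lambda>j v. ev f (SH N j v))" by (intro ext) (simp add: hR_eq)
  have GgL: "Gdif N ?gL" unfolding gL by (rule Gdif_sigma_rev)
  have GhR: "Gdif N ?hR" unfolding hR by (rule Gdif_sigma)
  have LcompL: "\<forall>i\<in>{1..N}. \<forall>u. set u \<subseteq> {1..N} \<longrightarrow> comp N ?gL f i u = idc i u"
    unfolding gL using LEFT[OF assms] by blast
  have RcompR: "\<forall>i\<in>{1..N}. \<forall>u. comp N f ?hR i u = idc i u"
    unfolding hR using RIGHT[OF assms] by blast
  have part2: "\<forall>g. Gdif N g \<longrightarrow>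
            ((\<forall>i\<in>{1..N}. \<forall>u\<in>words_over N. comp N g f i u = idc i u)
             \<longleftrightarrow> (\<forall>j\<in>{1..N}. \<forall>v\<in>words_over N. g j v = ?gL j v))"
  proof (intro allI impI iffI)
    fix g :: "nat \<Rightarrow> nat list \<Rightarrow> 'a" assume Gg: "Gdif N g"
    assume C: "\<forall>i\<in>{1..N}. \<forall>u\<in>words_over N. comp N g f i u = idc i u"
    have C': "\<forall>i\<in>{1..N}. \<forall>u. set u \<subseteq> {1..N} \<longrightarrow> comp N g f i u = comp N ?gL f i u"
      using C LcompL by (simp add: words_over_def)
    show "\<forall>j\<in>{1..N}. \<forall>v\<in>words_over N. g j v = ?gL j v"
      using UNIQ_L[OF assms Gg GgL C'] by (simp add: words_over_def)
  next
    fix g :: "nat \<Rightarrow> nat list \<Rightarrow> 'a" assume Gg: "Gdif N g"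
    assume E: "\<forall>j\<in>{1..N}. \<forall>v\<in>words_over N. g j v = ?gL j v"
    show "\<forall>i\<in>{1..N}. \<forall>u\<in>words_over N. comp N g f i u = idc i u"
    proof (intro ballI)
      fix i u assume i: "i \<in> {1..N}" and u: "u \<in> words_over N"
      have "comp N g f i u = comp N ?gL f i u"
        unfolding comp_CS
      proof (rule sum.cong[OF refl])
        fix w assume "w \<in> WS N (length u)"
        then have "g i w = ?gL i w" using E i by (simp add: WS_def words_over_def)
        then show "g i w * P f w u = ?gL i w * P f w u" by simp
      qed
      also have "\<dots> = idc i u" using LcompL i u by (simp add: words_over_def)
      finally show "comp N g f i u = idc i u" .
    qed
  qed
  have part4: "\<forall>h. Gdif N h \<longrightarrow>
            ((\<forall>i\<in>{1..N}. \<forall>u\<in>words_over N. comp N f h i u = idc i u)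
             \<longleftrightarrow> (\<forall>j\<in>{1..N}. \<forall>v\<in>words_over N. h j v = ?hR j v))"
  proof (intro allI impI iffI)
    fix h :: "nat \<Rightarrow> nat list \<Rightarrow> 'a" assume Gh: "Gdif N h"
    assume C: "\<forall>i\<in>{1..N}. \<forall>u\<in>words_over N. comp N f h i u = idc i u"
    have C': "\<forall>i\<in>{1..N}. \<forall>u. set u \<subseteq> {1..N} \<longrightarrow> comp N f h i u = comp N f ?hR i u"
      using C RcompR by (simp add: words_over_def)
    show "\<forall>j\<in>{1..N}. \<forall>v\<in>words_over N. h j v = ?hR j v"
      using UNIQ_R[OF assms Gh GhR C'] by (simp add: words_over_def)
  next
    fix h :: "nat \<Rightarrow> nat list \<Rightarrow> 'a" assume Gh: "Gdif N h"
    assume E: "\<forall>j\<in>{1..N}. \<forall>v\<in>words_over N. h j v = ?hR j v"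
    show "\<forall>i\<in>{1..N}. \<forall>u\<in>words_over N. comp N f h i u = idc i u"
    proof (intro ballI)
      fix i u assume i: "i \<in> {1..N}" and u: "u \<in> words_over N"
      have "comp N f h i u = comp N f ?hR i u"
        unfolding comp_CS
      proof (rule sum.cong[OF refl])
        fix w assume w: "w \<in> WS N (length u)"
        have "P h w u = P ?hR w u"
        proof (rule P_cong, intro ballI allI impI)
          fix j b assume "j \<in> set w" "b \<noteq> [] \<and> set b \<subseteq> set u \<and> length b + length w \<le> length u + 1"
          then have "j \<in> {1..N}" "b \<in> words_over N" using w u by (auto simp: WS_def words_over_def)
          then show "h j b = ?hR j b" using E by blast
        qed
        then show "f i w * P h w u = f i w * P ?hR w u" by simp
      qed
      also have "\<dots> = idc i u" using RcompR i by simp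
      finally show "comp N f h i u = idc i u" .
    qed
  qed
  show ?thesis using GgL part2 GhR part4 by blast
qed

end
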